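(* Let $\mathbf L$ be an algebraic lattice with an equa-interior operator $\eta$ satisfying property (I9). If $a$, $x$ and $z_i$ ($i\in I$, $I$ an arbitrary index set) are coatoms of $\mathbf L$ with $x\wedge z_i\le a$ properly for every $i\in I$, then $\eta(x)\vee\bigwedge_{i\in I}z_i=1$.
   Context: An equa-interior operator on an algebraic lattice $\mathbf L$ is a map $\eta:L\to L$ such that for all $x,y,z\in L$: (I1) $\eta(x)\le x$; (I2) $x\ge y$ implies $\eta(x)\ge\eta(y)$; (I3) $\eta^2(x)=\eta(x)$; (I4) $\eta(1)=1$; (I5) if $\eta(x)=u$ for all $x\in X\subseteq L$ then $\eta(\bigvee X)=u$; (I6) $\eta(x)\vee(y\wedge z)=(\eta(x)\vee y)\wedge(\eta(x)\vee z)$; (I7) the image $\eta(L)$ is the complete join subsemilattice of $L$ generated by the elements of $\eta(L)$ that are compact in $\mathbf L$; (I8) there is a compact element $w\in L$ with $\eta(w)=w$ such that the interval $[w,1]$ is isomorphic to the congruence lattice of a join semilattice with $0$. Define $\tau(y)=\bigvee\{u\in L:\eta(u)=\eta(y)\}$. Property (I9): for any index set $J$ and elements $x,c,z_j$ ($j\in J$) of $L$, if $\eta(x)\le c$ and $\bigwedge_{j\in J}\tau(z_j)\le\tau(c)$, then $\eta(\eta(x)\vee\bigwedge_{j\in J}\tau(x\wedge z_j))\le c$. For coatoms, "$x\wedge z\le a$ properly" means $x\wedge z\le a$ while $x\not\le a$ and $z\not\le a$. *)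

theory Defs
  imports Main
begin

text \<open>The algebraic lattice is the whole of a type of class complete_lattice.\<close>

definition compact_el :: "'a::complete_lattice \<Rightarrow> bool" where
  "compact_el c \<longleftrightarrow> (\<forall>X. c \<le> Sup X \<longrightarrow> (\<exists>F. finite F \<and> F \<subseteq> X \<and> c \<le> Sup F))"

definition algebraic_lattice :: "'a::complete_lattice itself \<Rightarrow> bool" where
  "algebraic_lattice TYPE('a) \<longleftrightarrow>
     (\<forall>x::'a. x = Sup {c. compact_el c \<and> c \<le> x})"

definition coatom :: "'a::complete_lattice \<Rightarrow> bool" where
  "coatom a \<longleftrightarrow> a < top \<and> (\<forall>y. a \<le> y \<longrightarrow> y = a \<or> y = top)"

definition join_semilattice0 :: "'b set \<Rightarrow> ('b \<Rightarrow> 'b \<Rightarrow> 'b) \<Rightarrow> 'b \<Rightarrow> bool" where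
  "join_semilattice0 S j e \<longleftrightarrow>
     e \<in> S \<and> (\<forall>a\<in>S. \<forall>b\<in>S. j a b \<in> S) \<and>
     (\<forall>a\<in>S. \<forall>b\<in>S. \<forall>c\<in>S. j (j a b) c = j a (j b c)) \<and>
     (\<forall>a\<in>S. \<forall>b\<in>S. j a b = j b a) \<and>
     (\<forall>a\<in>S. j a a = a) \<and>
     (\<forall>a\<in>S. j e a = a)"

text \<open>Congruences of the semilattice (S, j, e): equivalence relations on S compatible with j
  (compatibility with the constant e is automatic).\<close>
definition sl_congruence :: "'b set \<Rightarrow> ('b \<Rightarrow> 'b \<Rightarrow> 'b) \<Rightarrow> ('b \<times> 'b) set \<Rightarrow> bool" where
  "sl_congruence S j \<theta> \<longleftrightarrow> equiv S \<theta> \<and>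
     (\<forall>a b c. (a, b) \<in> \<theta> \<longrightarrow> c \<in> S \<longrightarrow> (j a c, j b c) \<in> \<theta>)"

definition interval_iso_Con :: "'a::complete_lattice \<Rightarrow> 'b set \<Rightarrow> ('b \<Rightarrow> 'b \<Rightarrow> 'b) \<Rightarrow> bool" where
  "interval_iso_Con w S j \<longleftrightarrow>
     (\<exists>f. bij_betw f {x. w \<le> x} {\<theta>. sl_congruence S j \<theta>} \<and>
          (\<forall>x y. w \<le> x \<longrightarrow> w \<le> y \<longrightarrow> (x \<le> y \<longleftrightarrow> f x \<subseteq> f y)))"

text \<open>Equa-interior operator. The semilattice in (I8) lives on a carrier in a type 'b, which is
  universally quantified at theorem level (equivalent to an existential over types in the
  hypothesis).\<close>
definition equa_interior :: "'b itself \<Rightarrow> ('a::complete_lattice \<Rightarrow> 'a) \<Rightarrow> bool" where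
  "equa_interior TYPE('b) \<eta> \<longleftrightarrow>
     (\<forall>x. \<eta> x \<le> x) \<and>
     (\<forall>x y. y \<le> x \<longrightarrow> \<eta> y \<le> \<eta> x) \<and>
     (\<forall>x. \<eta> (\<eta> x) = \<eta> x) \<and>
     \<eta> top = top \<and>
     (\<forall>X u. X \<noteq> {} \<longrightarrow> (\<forall>x\<in>X. \<eta> x = u) \<longrightarrow> \<eta> (Sup X) = u) \<and>
     (\<forall>x y z. sup (\<eta> x) (inf y z) = inf (sup (\<eta> x) y) (sup (\<eta> x) z)) \<and>
     range \<eta> = {Sup Y | Y. Y \<subseteq> {c \<in> range \<eta>. compact_el c}} \<and>
     (\<exists>w. compact_el w \<and> \<eta> w = w \<and>
        (\<exists>(S::'b set) j e. join_semilattice0 S j e \<and> interval_iso_Con w S j))"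

definition tau :: "('a::complete_lattice \<Rightarrow> 'a) \<Rightarrow> 'a \<Rightarrow> 'a" where
  "tau \<eta> y = Sup {u. \<eta> u = \<eta> y}"

text \<open>Property (I9); a family (z_j) enters only through its set of values Z.\<close>
definition prop_I9 :: "('a::complete_lattice \<Rightarrow> 'a) \<Rightarrow> bool" where
  "prop_I9 \<eta> \<longleftrightarrow>
     (\<forall>x c Z. \<eta> x \<le> c \<longrightarrow> Inf (tau \<eta> ` Z) \<le> tau \<eta> c \<longrightarrow>
        \<eta> (sup (\<eta> x) (Inf ((\<lambda>z. tau \<eta> (inf x z)) ` Z))) \<le> c)"

definition below_properly :: "'a::complete_lattice \<Rightarrow> 'a \<Rightarrow> 'a \<Rightarrow> bool" where
  "below_properly x z a \<longleftrightarrow> inf x z \<le> a \<and> \<not> x \<le> a \<and> \<not> z \<le> a"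

end

theory Submission
  imports Defs
begin

lemma coatom_sup:
  fixes c y :: "'a::complete_lattice"
  assumes "coatom c" "\<not> y \<le> c"
  shows "sup c y = top"
proof -
  have "c \<le> sup c y" by simp
  then have "sup c y = c \<or> sup c y = top" using assms(1) unfolding coatom_def by blast
  then show ?thesis using assms(2) by (metis sup.cobounded2)
qed

lemma coatom_lt: "coatom c \<Longrightarrow> c \<noteq> top"
  unfolding coatom_def by auto

theorem theorem7p5:
  fixes \<eta> :: "'a::complete_lattice \<Rightarrow> 'a"
    and a x :: 'a and z :: "'i \<Rightarrow> 'a" and I :: "'i set"
  assumes "algebraic_lattice TYPE('a)"
    and "equa_interior TYPE('b) \<eta>"
    and "prop_I9 \<eta>"
    and "coatom a" and "coatom x" and "\<forall>i\<in>I. coatom (z i)"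
    and "\<forall>i\<in>I. below_properly x (z i) a"
  shows "sup (\<eta> x) (INF i\<in>I. z i) = top"
proof (cases "I = {}")
  case True
  then show ?thesis by simp
next
  case False
  then obtain i0 where i0: "i0 \<in> I" by blast
  have I1: "\<And>x. \<eta> x \<le> x" and I2: "\<And>x y. y \<le> x \<Longrightarrow> \<eta> y \<le> \<eta> x"
    and I3: "\<And>x. \<eta> (\<eta> x) = \<eta> x" and I4: "\<eta> top = top"
    and I5: "\<And>X u. X \<noteq> {} \<Longrightarrow> (\<forall>x\<in>X. \<eta> x = u) \<Longrightarrow> \<eta> (Sup X) = u"
    and I6: "\<And>x y z. sup (\<eta> x) (inf y z) = inf (sup (\<eta> x) y) (sup (\<eta> x) z)"
  proof -
    note E = assms(2)[unfolded equa_interior_def]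
    note E1 = E[THEN conjunct1] and E2 = E[THEN conjunct2, THEN conjunct1]
      and E3 = E[THEN conjunct2, THEN conjunct2, THEN conjunct1]
      and E4 = E[THEN conjunct2, THEN conjunct2, THEN conjunct2, THEN conjunct1]
      and E5 = E[THEN conjunct2, THEN conjunct2, THEN conjunct2, THEN conjunct2, THEN conjunct1]
      and E6 = E[THEN conjunct2, THEN conjunct2, THEN conjunct2, THEN conjunct2, THEN conjunct2, THEN conjunct1]
    show "\<And>x. \<eta> x \<le> x" using E1 by blast
    show "\<And>x y. y \<le> x \<Longrightarrow> \<eta> y \<le> \<eta> x" using E2 by blast
    show "\<And>x. \<eta> (\<eta> x) = \<eta> x" using E3 by blast
    show "\<eta> top = top" using E4 by blast
    show "\<And>X u. X \<noteq> {} \<Longrightarrow> (\<forall>x\<in>X. \<eta> x = u) \<Longrightarrow> \<eta> (Sup X) = u" using E5 by blast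
    show "\<And>x y z. sup (\<eta> x) (inf y z) = inf (sup (\<eta> x) y) (sup (\<eta> x) z)" using E6 by blast
  qed
  have etaeq: "\<eta> u = \<eta> v" if "\<eta> v \<le> u" "u \<le> v" for u v
  proof -
    have "\<eta> v \<le> \<eta> u" using I2[OF that(1)] I3[of v] by simp
    moreover have "\<eta> u \<le> \<eta> v" using I2[OF that(2)] .
    ultimately show ?thesis by (rule antisym[rotated])
  qed
  have tau_ge: "y \<le> tau \<eta> y" for y unfolding tau_def by (rule Sup_upper) simp
  have eta_tau: "\<eta> (tau \<eta> y) = \<eta> y" for y
    unfolding tau_def by (rule I5) auto
  have tau_coatom: "tau \<eta> c = c" if "coatom c" for c
  proof (rule ccontr)
    assume "tau \<eta> c \<noteq> c"
    then have "tau \<eta> c = top" using that tau_ge[of c] unfolding coatom_def by blast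
    then have "\<eta> c = top" using eta_tau[of c] I4 by simp
    then show False using I1[of c] coatom_lt[OF that] by (simp add: top_unique)
  qed
  have tau_cong: "\<eta> u = \<eta> v \<Longrightarrow> tau \<eta> u = tau \<eta> v" for u v unfolding tau_def by simp
  have ea: "\<eta> a \<le> x \<and> \<eta> a \<le> z i" if "i \<in> I" for i
  proof -
    have zc: "coatom (z i)" and bp: "below_properly x (z i) a" using assms that by auto
    then have h1: "inf x (z i) \<le> a" "\<not> x \<le> a" "\<not> z i \<le> a"
      unfolding below_properly_def by auto
    have lhs: "sup (\<eta> a) (inf x (z i)) \<le> a" using h1 I1[of a] by simp
    have e: "sup (\<eta> a) (inf x (z i)) = inf (sup (\<eta> a) x) (sup (\<eta> a) (z i))" by (rule I6)
    show ?thesis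
    proof (rule conjI; rule ccontr)
      assume "\<not> \<eta> a \<le> x"
      then have "sup (\<eta> a) x = top" using coatom_sup[OF assms(5)] by (metis sup.commute)
      then have "z i \<le> a" using lhs unfolding e by simp
      then show False using h1 by simp
    next
      assume "\<not> \<eta> a \<le> z i"
      then have "sup (\<eta> a) (z i) = top" using coatom_sup[OF zc] by (metis sup.commute)
      then have "x \<le> a" using lhs unfolding e by simp
      then show False using h1 by simp
    qed
  qed
  have xa: "\<not> x \<le> a" using assms(7) i0 unfolding below_properly_def by auto
  have ax: "\<not> a \<le> x"
  proof
    assume "a \<le> x"
    then have "x = a \<or> x = top" using assms(4) unfolding coatom_def by blast
    then show False using xa coatom_lt[OF assms(5)] by auto
  qed
  have supxa: "sup x a = top" using coatom_sup[OF assms(5) ax] .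
  have nexa: "\<not> \<eta> x \<le> a"
  proof
    assume h: "\<eta> x \<le> a"
    have "\<eta> x \<le> \<eta> a" using I2[OF h] I3[of x] by simp
    moreover have "\<eta> a \<le> \<eta> x" using I2[OF conjunct1[OF ea[OF i0]]] I3[of a] by simp
    ultimately have eq: "\<eta> a = \<eta> x" by simp
    have "\<eta> (Sup {x, a}) = \<eta> x" by (rule I5) (auto simp: eq)
    then have "\<eta> x = top" using supxa I4 by simp
    then show False using I1[of x] coatom_lt[OF assms(5)] by (simp add: top_unique)
  qed
  have top1: "sup (\<eta> x) a = top" using coatom_sup[OF assms(4) nexa] by (simp add: sup.commute)
  have tauxz: "tau \<eta> (inf x (z i)) = a" if "i \<in> I" for i
  proof -
    have "inf x (z i) \<le> a" using assms(7) that unfolding below_properly_def by auto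
    moreover have "\<eta> a \<le> inf x (z i)" using ea[OF that] by simp
    ultimately have "\<eta> (inf x (z i)) = \<eta> a" using etaeq by blast
    then show ?thesis using tau_cong[of "inf x (z i)" a] tau_coatom[OF assms(4)] by simp
  qed
  define Z where "Z = z ` I"
  define c where "c = sup (\<eta> x) (INF i\<in>I. z i)"
  have img: "(\<lambda>w. tau \<eta> (inf x w)) ` Z = {a}" using tauxz False unfolding Z_def by auto
  have tZ: "tau \<eta> ` Z = Z" unfolding Z_def using tau_coatom assms(6) by (auto simp: image_iff)
  have h1: "\<eta> x \<le> c" unfolding c_def by simp
  have h2: "Inf (tau \<eta> ` Z) \<le> tau \<eta> c"
  proof -
    have "Inf Z \<le> c" unfolding Z_def c_def by simp
    then show ?thesis using tZ tau_ge[of c] by simp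
  qed
  have "\<eta> (sup (\<eta> x) (Inf ((\<lambda>w. tau \<eta> (inf x w)) ` Z))) \<le> c"
    using assms(3) h1 h2 unfolding prop_I9_def by blast
  then have "top \<le> c" using img top1 I4 by simp
  then show ?thesis unfolding c_def using top.extremum_unique by blast
qed

end
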